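(* Let $H \in \mathbb{R}^{r \times n}_+$ be an entrywise nonnegative matrix satisfying the NC-SSC, i.e., $e - e_i \in \operatorname{cone}(H)$ for all $i \in \{1,\dots,r\}$. Then every $x \in \mathbb{R}^r$ with $e^\top x = 1$ and $H^\top x \ge 0$ (entrywise) satisfies $2 - r \le x_i \le 1$ for all $i \in \{1,\dots,r\}$.
   Context: $e \in \mathbb{R}^r$ denotes the all-ones vector and $e_i$ the $i$-th standard unit vector of $\mathbb{R}^r$. For $H \in \mathbb{R}^{r\times n}$, $\operatorname{cone}(H) = \{ Hy : y \in \mathbb{R}^n, y \ge 0\}$. The NC-SSC for $H$ means $\operatorname{cone}(ee^\top - I) \subseteq \operatorname{cone}(H)$, equivalently $e - e_i \in \operatorname{cone}(H)$ for all $i$. *)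

theory Defs
  imports "HOL-Analysis.Analysis"
begin

text \<open>Matrices H in R^{r x n} are rendered as real^'n^'r (rows indexed by 'r,
columns by 'n). cone(H) = {H y : y >= 0}.\<close>

definition mat_cone :: "real^'n^'r \<Rightarrow> (real^'r) set" where
  "mat_cone H = {H *v y | y. \<forall>j. y $ j \<ge> 0}"

definition ones :: "real^'r" where
  "ones = (\<chi> i. 1)"

definition unitv :: "'r \<Rightarrow> real^'r" where
  "unitv i = (\<chi> k. if k = i then 1 else 0)"

definition NC_SSC :: "real^'n^'r \<Rightarrow> bool" where
  "NC_SSC H \<longleftrightarrow> (\<forall>i. ones - unitv i \<in> mat_cone H)"

end

theory Submission
  imports Defs
begin

theorem lemma2:
  fixes H :: "real^'n^'r" and x :: "real^'r"
  assumes nonneg: "\<forall>i j. H $ i $ j \<ge> 0"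
    and ssc: "NC_SSC H"
    and sum1: "ones \<bullet> x = 1"
    and feas: "\<forall>j. (transpose H *v x) $ j \<ge> 0"
  shows "\<forall>i. 2 - real CARD('r) \<le> x $ i \<and> x $ i \<le> 1"
proof -
  have s: "(\<Sum>k\<in>UNIV. x $ k) = 1"
    using sum1 by (simp add: inner_vec_def ones_def)
  have le1: "x $ i \<le> 1" for i
  proof -
    obtain y where y: "ones - unitv i = H *v y" "\<forall>j. y $ j \<ge> 0"
      using ssc unfolding NC_SSC_def mat_cone_def by blast
    have "(ones - unitv i) \<bullet> x = x \<bullet> (H *v y)" using y(1) by (simp add: inner_commute)
    also have "\<dots> = (x v* H) \<bullet> y" by (simp add: dot_lmul_matrix)
    also have "\<dots> = (transpose H *v x) \<bullet> y" by simp
    also have "\<dots> \<ge> 0" unfolding inner_vec_def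
      using feas y(2) by (intro sum_nonneg) simp
    finally have "0 \<le> (ones - unitv i) \<bullet> x" .
    moreover have "(ones - unitv i) \<bullet> x = 1 - x $ i"
    proof -
      have "unitv i \<bullet> x = x $ i"
        by (simp add: unitv_def inner_vec_def mult_if_delta)
      then show ?thesis using sum1 by (simp add: inner_diff_left)
    qed
    ultimately show ?thesis by simp
  qed
  have ge: "2 - real CARD('r) \<le> x $ i" for i
  proof -
    have "(\<Sum>k\<in>UNIV. x $ k) = x $ i + (\<Sum>k\<in>UNIV - {i}. x $ k)"
      by (simp add: sum.remove)
    also have "(\<Sum>k\<in>UNIV - {i}. x $ k) \<le> (\<Sum>k\<in>UNIV - {i}. 1)"
      by (intro sum_mono le1)
    also have "\<dots> = real CARD('r) - 1"
      by (simp add: card_Diff_singleton)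
    finally show ?thesis using s by simp
  qed
  show ?thesis using le1 ge by blast
qed

end
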